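(* For every integer $n\geq 16$ there exists a graph $G$ on $n+1$ vertices with $r(G) > \frac{1}{3} n\log n$, together with a vertex $v\in V(G)$ such that the graph $H = G\setminus\{v\}$ obtained by deleting $v$ satisfies $r(H) = n$.
   Context: For a graph $F$, the Ramsey number $r(F)$ is the minimum $N$ such that every two-coloring of the edges of the complete graph $K_N$ contains a monochromatic copy of $F$. All logarithms are to base $2$. *)

theory Defs
  imports Complex_Main
begin

definition simple_graph :: "'a set \<Rightarrow> 'a set set \<Rightarrow> bool" where
  "simple_graph V E \<longleftrightarrow> finite V \<and>
     (\<forall>e\<in>E. \<exists>u v. u \<in> V \<and> v \<in> V \<and> u \<noteq> v \<and> e = {u, v})"

text \<open>A two-colouring of the edges of K_N (vertex set {..<N}) is a map
  c from 2-subsets to bool.\<close>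
definition mono_copy :: "'a set \<Rightarrow> 'a set set \<Rightarrow> nat \<Rightarrow> (nat set \<Rightarrow> bool) \<Rightarrow> bool" where
  "mono_copy V E N c \<longleftrightarrow>
     (\<exists>f b. inj_on f V \<and> f ` V \<subseteq> {..<N} \<and> (\<forall>e\<in>E. c (f ` e) = b))"

definition ramsey_number :: "'a set \<Rightarrow> 'a set set \<Rightarrow> nat" where
  "ramsey_number V E = (LEAST N. \<forall>c. mono_copy V E N c)"

definition delete_vertex :: "'a set \<Rightarrow> 'a set set \<Rightarrow> 'a \<Rightarrow> 'a set \<times> 'a set set" where
  "delete_vertex V E v = (V - {v}, {e \<in> E. v \<notin> e})"

end

theory Submission
  imports Defs "HOL-Library.Discrete_Functions"
begin

lemma ramsey_aux:
  fixes c :: "'a set \<Rightarrow> bool"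
  shows "\<forall>s t S. s + t = m \<longrightarrow> 1 \<le> s \<longrightarrow> 1 \<le> t \<longrightarrow> finite S \<longrightarrow> 2^(s+t-2) \<le> card S \<longrightarrow>
    (\<exists>A\<subseteq>S. card A = s \<and> (\<forall>x\<in>A. \<forall>y\<in>A. x\<noteq>y \<longrightarrow> c{x,y})) \<or>
    (\<exists>A\<subseteq>S. card A = t \<and> (\<forall>x\<in>A. \<forall>y\<in>A. x\<noteq>y \<longrightarrow> \<not> c{x,y}))"
proof (induction m rule: less_induct)
  case (less m)
  show ?case
  proof (intro allI impI)
    fix s t :: nat and S :: "'a set" assume st: "s+t=m" "1\<le>s" "1\<le>t" "finite S" "2^(s+t-2) \<le> card S"
    have "(1::nat) \<le> 2^(s+t-2)" by simp
    hence "card S \<ge> 1" using st(5) by linarith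
    then obtain x where x: "x \<in> S" by fastforce
    show "(\<exists>A\<subseteq>S. card A = s \<and> (\<forall>x\<in>A. \<forall>y\<in>A. x\<noteq>y \<longrightarrow> c{x,y})) \<or>
      (\<exists>A\<subseteq>S. card A = t \<and> (\<forall>x\<in>A. \<forall>y\<in>A. x\<noteq>y \<longrightarrow> \<not> c{x,y}))"
    proof (cases "s = 1")
      case True then show ?thesis by (intro disjI1 exI[of _ "{x}"]) (simp add: x)
    next
      case sF: False
      show ?thesis
      proof (cases "t = 1")
        case True then show ?thesis by (intro disjI2 exI[of _ "{x}"]) (simp add: x)
      next
        case tF: False
        define R where "R = {y \<in> S - {x}. c{x,y}}"
        define B where "B = {y \<in> S - {x}. \<not> c{x,y}}"
        have fin: "finite R" "finite B" using st(4) by (auto simp: R_def B_def)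
        have un: "R \<union> B = S - {x}" "R \<inter> B = {}" by (auto simp: R_def B_def)
        have "card (R \<union> B) = card R + card B" using fin un(2) by (rule card_Un_disjoint)
        hence sum: "card R + card B = card S - 1" using un(1) x st(4) by simp
        have "s+t-2 = Suc (s+t-3)" using sF tF st by arith
        hence pw: "2^(s+t-2) = 2 * (2::nat)^(s+t-3)" by simp
        have "2^(s+t-3) \<le> card R \<or> 2^(s+t-3) \<le> card B"
          using sum pw st(5) \<open>card S \<ge> 1\<close> by linarith
        then show ?thesis
        proof
          assume hR: "2^(s+t-3) \<le> card R"
          have lt: "m - 1 < m" using st by arith
          have e: "(s-1)+t-2 = s+t-3" using st(2) by arith
          have "(\<exists>A\<subseteq>R. card A = s-1 \<and> (\<forall>x\<in>A. \<forall>y\<in>A. x\<noteq>y \<longrightarrow> c{x,y})) \<or>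
            (\<exists>A\<subseteq>R. card A = t \<and> (\<forall>x\<in>A. \<forall>y\<in>A. x\<noteq>y \<longrightarrow> \<not> c{x,y}))"
            using less.IH[OF lt, rule_format, of "s-1" t R] st sF fin hR e by auto
          then show ?thesis
          proof
            assume "\<exists>A\<subseteq>R. card A = s-1 \<and> (\<forall>x\<in>A. \<forall>y\<in>A. x\<noteq>y \<longrightarrow> c{x,y})"
            then obtain A where A: "A \<subseteq> R" "card A = s-1" "\<forall>x\<in>A. \<forall>y\<in>A. x\<noteq>y \<longrightarrow> c{x,y}" by blast
            have fA: "finite A" using A(1) fin(1) finite_subset by blast
            have xA: "x \<notin> A" using A(1) by (auto simp: R_def)
            have "insert x A \<subseteq> S" using A(1) x by (auto simp: R_def)
            moreover have "card (insert x A) = s" using fA xA A(2) st(2) by simp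
            moreover have "\<forall>u\<in>insert x A. \<forall>v\<in>insert x A. u\<noteq>v \<longrightarrow> c{u,v}"
              using A(1,3) by (auto simp: R_def insert_commute)
            ultimately show ?thesis by blast
          next
            assume "\<exists>A\<subseteq>R. card A = t \<and> (\<forall>x\<in>A. \<forall>y\<in>A. x\<noteq>y \<longrightarrow> \<not> c{x,y})"
            then show ?thesis by (auto simp: R_def)
          qed
        next
          assume hB: "2^(s+t-3) \<le> card B"
          have lt: "m - 1 < m" using st by arith
          have e: "s+(t-1)-2 = s+t-3" using st(3) by arith
          have "(\<exists>A\<subseteq>B. card A = s \<and> (\<forall>x\<in>A. \<forall>y\<in>A. x\<noteq>y \<longrightarrow> c{x,y})) \<or>
            (\<exists>A\<subseteq>B. card A = t-1 \<and> (\<forall>x\<in>A. \<forall>y\<in>A. x\<noteq>y \<longrightarrow> \<not> c{x,y}))"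
            using less.IH[OF lt, rule_format, of s "t-1" B] st tF fin hB e by auto
          then show ?thesis
          proof
            assume "\<exists>A\<subseteq>B. card A = t-1 \<and> (\<forall>x\<in>A. \<forall>y\<in>A. x\<noteq>y \<longrightarrow> \<not> c{x,y})"
            then obtain A where A: "A \<subseteq> B" "card A = t-1" "\<forall>x\<in>A. \<forall>y\<in>A. x\<noteq>y \<longrightarrow> \<not> c{x,y}" by blast
            have fA: "finite A" using A(1) fin(2) finite_subset by blast
            have xA: "x \<notin> A" using A(1) by (auto simp: B_def)
            have "insert x A \<subseteq> S" using A(1) x by (auto simp: B_def)
            moreover have "card (insert x A) = t" using fA xA A(2) st(3) by simp
            moreover have "\<forall>u\<in>insert x A. \<forall>v\<in>insert x A. u\<noteq>v \<longrightarrow> \<not> c{u,v}"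
              using A(1,3) by (auto simp: B_def insert_commute)
            ultimately show ?thesis by blast
          next
            assume "\<exists>A\<subseteq>B. card A = s \<and> (\<forall>x\<in>A. \<forall>y\<in>A. x\<noteq>y \<longrightarrow> c{x,y})"
            then show ?thesis by (auto simp: B_def)
          qed
        qed
      qed
    qed
  qed
qed

lemma ramsey_diag:
  fixes c :: "'a set \<Rightarrow> bool"
  assumes "finite S" "1 \<le> k" "2^(2*k-2) \<le> card S"
  shows "\<exists>A b. A \<subseteq> S \<and> card A = k \<and> (\<forall>x\<in>A. \<forall>y\<in>A. x\<noteq>y \<longrightarrow> c{x,y} = b)"
proof -
  have "(\<exists>A\<subseteq>S. card A = k \<and> (\<forall>x\<in>A. \<forall>y\<in>A. x\<noteq>y \<longrightarrow> c{x,y})) \<or>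
    (\<exists>A\<subseteq>S. card A = k \<and> (\<forall>x\<in>A. \<forall>y\<in>A. x\<noteq>y \<longrightarrow> \<not> c{x,y}))"
    using ramsey_aux[of "k+k" c, rule_format, of k k S] assms by (simp add: mult_2)
  then show ?thesis by (metis (full_types))
qed

lemma copy_from_clique:
  assumes "simple_graph V E" "A \<subseteq> {..<N}" "card A = card V"
    "\<forall>x\<in>A. \<forall>y\<in>A. x\<noteq>y \<longrightarrow> c{x,y} = b"
  shows "mono_copy V E N c"
proof -
  have fV: "finite V" using assms(1) by (simp add: simple_graph_def)
  have fA: "finite A" using assms(2) finite_subset by blast
  obtain g where g: "bij_betw g V A" using finite_same_card_bij[OF fV fA] assms(3) by metis
  have inj: "inj_on g V" and im: "g ` V = A" using g by (auto simp: bij_betw_def)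
  have "\<forall>e\<in>E. c (g ` e) = b"
  proof
    fix e assume "e \<in> E"
    then obtain u w where u: "u \<in> V" "w \<in> V" "u \<noteq> w" "e = {u,w}"
      using assms(1) by (auto simp: simple_graph_def)
    have "g u \<noteq> g w" using inj u by (metis inj_on_def)
    moreover have "g u \<in> A" "g w \<in> A" using im u by auto
    ultimately show "c (g ` e) = b" using assms(4) u(4) by simp
  qed
  then show ?thesis unfolding mono_copy_def using inj im assms(2) by blast
qed

lemma mono_copy_mono: "mono_copy V E N c \<Longrightarrow> N \<le> M \<Longrightarrow> mono_copy V E M c"
  unfolding mono_copy_def by fastforce

lemma ramsey_exists:
  assumes "simple_graph V E" "card V \<ge> 1"
  shows "\<exists>N. \<forall>c. mono_copy V E N c"
proof -
  let ?N = "2^(2*card V - 2) :: nat"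
  have "mono_copy V E ?N c" for c
  proof -
    obtain A b where A: "A \<subseteq> {..<?N}" "card A = card V" "\<forall>x\<in>A. \<forall>y\<in>A. x\<noteq>y \<longrightarrow> c{x,y} = b"
      using ramsey_diag[of "{..<?N}" "card V" c] assms(2) by auto
    then show ?thesis using copy_from_clique[OF assms(1) A] by blast
  qed
  then show ?thesis by blast
qed

lemma ramsey_gt:
  assumes "\<exists>N. \<forall>c. mono_copy V E N c" "\<not> mono_copy V E M c0"
  shows "M < ramsey_number V E"
proof (rule ccontr)
  assume "\<not> M < ramsey_number V E"
  moreover have "\<forall>c. mono_copy V E (ramsey_number V E) c"
    unfolding ramsey_number_def using assms(1) by (rule LeastI_ex)
  ultimately show False using assms(2) mono_copy_mono by (metis not_less)
qed


lemma H_copy: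
  fixes c :: "nat set \<Rightarrow> bool"
  assumes "k \<le> n" "A \<subseteq> {..<n}" "card A = k" "\<forall>x\<in>A. \<forall>y\<in>A. x\<noteq>y \<longrightarrow> c{x,y} = b"
  shows "mono_copy {..<n} {{i,j} | i j. i<k \<and> j<k \<and> i\<noteq>j} n c"
proof -
  have fA: "finite A" using assms(2) finite_subset by blast
  obtain g where g: "bij_betw g {..<k} A"
    using finite_same_card_bij[of "{..<k}" A] fA assms(3) by auto
  have cd: "card ({..<n} - A) = n - k" using assms(2,3) fA by (simp add: card_Diff_subset)
  obtain g' where g': "bij_betw g' {k..<n} ({..<n} - A)"
    using finite_same_card_bij[of "{k..<n}" "{..<n} - A"] cd by auto
  define f where "f = (\<lambda>x. if x < k then g x else g' x)"
  have b1: "bij_betw f {..<k} A" using g by (rule bij_betw_cong[THEN iffD1, rotated]) (simp add: f_def)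
  have b2: "bij_betw f {k..<n} ({..<n} - A)" using g' by (rule bij_betw_cong[THEN iffD1, rotated]) (simp add: f_def)
  have "bij_betw f ({..<k} \<union> {k..<n}) (A \<union> ({..<n} - A))"
    by (rule bij_betw_combine[OF b1 b2]) auto
  moreover have "{..<k} \<union> {k..<n} = {..<n}" using assms(1) by auto
  moreover have "A \<union> ({..<n} - A) = {..<n}" using assms(2) by auto
  ultimately have bf: "bij_betw f {..<n} {..<n}" by simp
  have inj: "inj_on f {..<n}" and im: "f ` {..<n} = {..<n}" using bf by (auto simp: bij_betw_def)
  have "\<forall>e\<in>{{i,j} | i j. i<k \<and> j<k \<and> i\<noteq>j}. c (f ` e) = b"
  proof
    fix e assume "e \<in> {{i,j} | i j. i<k \<and> j<k \<and> i\<noteq>j}"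
    then obtain i j where ij: "i<k" "j<k" "i\<noteq>j" "e = {i,j}" by blast
    have "i \<in> {..<n}" "j \<in> {..<n}" using ij assms(1) by auto
    then have "f i \<noteq> f j" using inj_onD[OF inj, of i j] ij(3) by blast
    moreover have "f i \<in> A" "f j \<in> A" using b1 ij by (auto simp: bij_betw_def)
    ultimately show "c (f ` e) = b" using assms(4) ij(4) by simp
  qed
  then show ?thesis unfolding mono_copy_def using inj im by blast
qed

lemma block_col:
  fixes m k n :: nat and E :: "nat set set"
  assumes "m > 0" "k \<le> n" "m < n + 1"
    and EH: "\<And>i j. i<k \<Longrightarrow> j<k \<Longrightarrow> i\<noteq>j \<Longrightarrow> {i,j} \<in> E"
    and ES: "\<And>i. i<n \<Longrightarrow> {i,n} \<in> E"
  shows "\<not> mono_copy {..n} E (k*m) (\<lambda>e. \<forall>x\<in>e. \<forall>y\<in>e. x div m = y div m)"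
proof
  assume "mono_copy {..n} E (k*m) (\<lambda>e. \<forall>x\<in>e. \<forall>y\<in>e. x div m = y div m)"
  then obtain f b where fb: "inj_on f {..n} \<and> f ` {..n} \<subseteq> {..<k*m} \<and>
      (\<forall>e\<in>E. (\<forall>x\<in>f ` e. \<forall>y\<in>f ` e. x div m = y div m) = b)"
    unfolding mono_copy_def by blast
  have inj: "inj_on f {..n}" and im: "f ` {..n} \<subseteq> {..<k*m}" using fb by auto
  have ed: "(\<forall>x\<in>f ` e. \<forall>y\<in>f ` e. x div m = y div m) = b" if "e \<in> E" for e
    using fb that by blast
  have edge: "(f i div m = f j div m) = b" if "{i,j} \<in> E" for i j
  proof -
    have "(\<forall>x\<in>f ` {i,j}. \<forall>y\<in>f ` {i,j}. x div m = y div m) \<longleftrightarrow> f i div m = f j div m" by auto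
    then show ?thesis using ed[OF that] by simp
  qed
  show False
  proof (cases b)
    case True
    have d: "f i div m = f n div m" if "i \<le> n" for i
    proof (cases "i = n")
      case False
      then have "{i,n} \<in> E" using that ES by simp
      then show ?thesis using edge[of i n] True by simp
    qed simp
    have "inj_on (\<lambda>x. f x mod m) {..n}"
    proof (rule inj_onI)
      fix x y assume xy: "x \<in> {..n}" "y \<in> {..n}" "f x mod m = f y mod m"
      have dx: "f x div m = f n div m" by (rule d) (use xy(1) in simp)
      have dy: "f y div m = f n div m" by (rule d) (use xy(2) in simp)
      have "f x div m = f y div m" using dx dy by (rule trans_sym)
      then have "f x = f y" using xy(3) by (metis div_mult_mod_eq)
      then show "x = y" using inj xy by (meson inj_onD)
    qed
    moreover have "(\<lambda>x. f x mod m) ` {..n} \<subseteq> {..<m}" using assms(1) by auto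
    ultimately have "card {..n} \<le> card {..<m}" by (intro card_inj_on_le) auto
    then show False using assms(3) by simp
  next
    case False
    have d: "f i div m \<noteq> f j div m" if "i \<in> insert n {..<k}" "j \<in> insert n {..<k}" "i \<noteq> j" for i j
    proof -
      have "{i,j} \<in> E"
      proof (cases "i = n")
        case True
        then have "{i,j} = {j,n}" "j < n" using that assms(2) by auto
        then show ?thesis using ES[of j] ES[of i] by simp
      next
        case iF: False
        show ?thesis
        proof (cases "j = n")
          case True
          then have "{i,j} = {i,n}" "i < n" using that assms(2) iF by auto
          then show ?thesis using ES[of j] ES[of i] by simp
        next
          case False
          then have "i < k" "j < k" using that iF by auto
          then show ?thesis using that(3) EH by simp
        qed
      qed
      then show ?thesis using edge[of i j] \<open>\<not> b\<close> by simp
    qed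
    have "inj_on (\<lambda>x. f x div m) (insert n {..<k})"
    proof (rule inj_onI)
      fix x y assume xy: "x \<in> insert n {..<k}" "y \<in> insert n {..<k}" "f x div m = f y div m"
      show "x = y"
      proof (rule ccontr)
        assume "x \<noteq> y"
        then show False using d[OF xy(1,2)] xy(3) by simp
      qed
    qed
    moreover have "(\<lambda>x. f x div m) ` (insert n {..<k}) \<subseteq> {..<k}"
    proof
      fix z assume "z \<in> (\<lambda>x. f x div m) ` (insert n {..<k})"
      then obtain x where x: "x \<in> insert n {..<k}" "z = f x div m" by blast
      have "x \<in> {..n}" using x assms(2) by auto
      then have "f x < k * m" using im by auto
      then show "z \<in> {..<k}" using x(2) less_mult_imp_div_less[of "f x" k m] by simp
    qed
    ultimately have "card (insert n {..<k}) \<le> card {..<k}" by (intro card_inj_on_le) auto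
    then show False using assms(2) by simp
  qed
qed

theorem theorem1p2:
  fixes n :: nat
  assumes "n \<ge> 16"
  shows "\<exists>(V :: nat set) E v.
           simple_graph V E \<and> card V = n + 1 \<and> v \<in> V \<and>
           real (ramsey_number V E) > 1/3 * real n * log 2 (real n) \<and>
           ramsey_number (fst (delete_vertex V E v)) (snd (delete_vertex V E v)) = n"
proof -
  define L where "L = floor_log n"
  define k where "k = L div 2 + 1"
  define m where "m = n - 1"
  define EH where "EH = {{i,j} | i j. i<k \<and> j<k \<and> i\<noteq>j}"
  define EG where "EG = EH \<union> {{i,n} | i. i<n}"
  have L1: "2^L \<le> n" unfolding L_def using assms by (intro floor_log_exp2_le) simp
  have L2: "n < 2 * 2^L" unfolding L_def by (rule floor_log_exp2_gt)
  have "floor_log ((2::nat)^4) \<le> floor_log n" using assms by (intro floor_log_le_iff) simp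
  hence L4: "L \<ge> 4" unfolding L_def by (simp only: floor_log_power)
  have "(2::nat)^(2*k-2) \<le> 2^L" unfolding k_def by (intro power_increasing) auto
  hence kb: "2^(2*k-2) \<le> n" using L1 by linarith
  have "L < 2^L" by (rule less_exp)
  hence kn: "k < n" using L1 L4 unfolding k_def by linarith
  have k1: "1 \<le> k" unfolding k_def by simp
  have sgH: "simple_graph {..<n} EH" unfolding simple_graph_def
  proof (intro conjI ballI)
    fix e assume "e \<in> EH"
    then obtain i j where ij: "i<k" "j<k" "i\<noteq>j" "e = {i,j}" unfolding EH_def by blast
    then show "\<exists>u v. u \<in> {..<n} \<and> v \<in> {..<n} \<and> u \<noteq> v \<and> e = {u, v}"
      using kn by (intro exI[of _ i] exI[of _ j]) auto
  qed simp
  have sgG: "simple_graph {..n} EG" unfolding simple_graph_def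
  proof (intro conjI ballI)
    fix e assume "e \<in> EG"
    then consider (a) "e \<in> EH" | (b) "e \<in> {{i,n} | i. i<n}" unfolding EG_def by blast
    then show "\<exists>u v. u \<in> {..n} \<and> v \<in> {..n} \<and> u \<noteq> v \<and> e = {u, v}"
    proof cases
      case a
      then obtain i j where ij: "i<k" "j<k" "i\<noteq>j" "e = {i,j}" unfolding EH_def by blast
      then show ?thesis using kn by (intro exI[of _ i] exI[of _ j]) auto
    next
      case b
      then obtain i where i: "i<n" "e = {i,n}" by blast
      then show ?thesis by (intro exI[of _ i] exI[of _ n]) auto
    qed
  qed simp
  have del: "delete_vertex {..n} EG n = ({..<n}, EH)"
  proof -
    have 1: "{..n} - {n} = {..<n}" by auto
    have 2: "{e \<in> EG. n \<notin> e} = EH"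
    proof
      show "{e \<in> EG. n \<notin> e} \<subseteq> EH"
      proof
        fix e assume e: "e \<in> {e \<in> EG. n \<notin> e}"
        then have "e \<in> EH \<or> e \<in> {{i,n} | i. i<n}" "n \<notin> e" unfolding EG_def by auto
        then show "e \<in> EH" by blast
      qed
    next
      show "EH \<subseteq> {e \<in> EG. n \<notin> e}"
      proof
        fix e assume e: "e \<in> EH"
        then obtain i j where ij: "i<k" "j<k" "e = {i,j}" unfolding EH_def by blast
        have "n \<notin> e" using ij kn by auto
        moreover have "e \<in> EG" using e unfolding EG_def by blast
        ultimately show "e \<in> {e \<in> EG. n \<notin> e}" by blast
      qed
    qed
    show ?thesis unfolding delete_vertex_def 1 2 ..
  qed
  have PH: "mono_copy {..<n} EH n c" for c
  proof -
    obtain A b where A: "A \<subseteq> {..<n}" "card A = k" "\<forall>x\<in>A. \<forall>y\<in>A. x\<noteq>y \<longrightarrow> c{x,y} = b"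
      using ramsey_diag[of "{..<n}" k c] k1 kb by auto
    show ?thesis unfolding EH_def using H_copy[OF _ A] kn by simp
  qed
  have rH: "ramsey_number {..<n} EH = n"
    unfolding ramsey_number_def
  proof (rule Least_equality)
    show "\<forall>c. mono_copy {..<n} EH n c" using PH by blast
  next
    fix N assume aN: "\<forall>c. mono_copy {..<n} EH N c"
    have "mono_copy {..<n} EH N (\<lambda>_. True)" using aN by (rule spec)
    then obtain f where "inj_on f {..<n}" "f ` {..<n} \<subseteq> {..<N}"
      unfolding mono_copy_def by (elim exE conjE) simp
    then have "card {..<n} \<le> card {..<N}" by (intro card_inj_on_le) auto
    then show "n \<le> N" by simp
  qed
  have ex: "\<exists>N. \<forall>c. mono_copy {..n} EG N c" using ramsey_exists[OF sgG] by simp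
  have nc: "\<not> mono_copy {..n} EG (k*m) (\<lambda>e. \<forall>x\<in>e. \<forall>y\<in>e. x div m = y div m)"
  proof (rule block_col)
    show "0 < m" "k \<le> n" "m < n + 1" using kn assms unfolding m_def by auto
  next
    fix i j assume "i<k" "j<k" "i\<noteq>j" then show "{i,j} \<in> EG" unfolding EG_def EH_def by blast
  next
    fix i assume "i<n" then show "{i,n} \<in> EG" unfolding EG_def by blast
  qed
  have rG: "k*m < ramsey_number {..n} EG" by (rule ramsey_gt[OF ex nc])
  have "n < 2^(L+1)" using L2 by simp
  then have "real n < real (2^(L+1))" by (simp only: of_nat_less_iff)
  then have n2: "real n < 2^(L+1)" by simp
  have "log 2 (real n) < real (L+1)"
    using log_of_power_less[of n 2 "L+1"] n2 assms by simp
  moreover have "real (L+1) \<le> 2 * real k"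
  proof -
    have aux: "\<And>(a::nat) q r. a = 2*q + r \<Longrightarrow> r < 2 \<Longrightarrow> a+1 \<le> 2*(q+1)" by presburger
    have "L = 2 * (L div 2) + L mod 2" by simp
    moreover have "L mod 2 < 2" by simp
    ultimately have "L + 1 \<le> 2 * (L div 2 + 1)" by (rule aux)
    then have "L + 1 \<le> 2 * k" unfolding k_def .
    then have "real (L+1) \<le> real (2 * k)" by (simp only: of_nat_le_iff)
    then show ?thesis by simp
  qed
  ultimately have lg: "log 2 (real n) < 2 * real k" by linarith
  have npos: "0 < real n" using assms by simp
  have "1/3 * real n * log 2 (real n) < 1/3 * real n * (2 * real k)"
    using lg npos by (intro mult_strict_left_mono) auto
  also have "\<dots> \<le> real (k*m)"
  proof -
    have "real m = real n - 1" unfolding m_def using assms by simp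
    moreover have "2/3 * real n \<le> real n - 1" using assms by simp
    ultimately have "2/3 * real n \<le> real m" by simp
    then have "real k * (2/3 * real n) \<le> real k * real m" by (intro mult_left_mono) auto
    then show ?thesis by (simp add: algebra_simps)
  qed
  also have "\<dots> < real (ramsey_number {..n} EG)" using rG by (simp only: of_nat_less_iff)
  finally have big: "1/3 * real n * log 2 (real n) < real (ramsey_number {..n} EG)" .
  show ?thesis
    by (intro exI[of _ "{..n}"] exI[of _ EG] exI[of _ n]) (use sgG big del rH in simp)
qed

end
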